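(* Let $\alpha$ be irrational and $n\ge1$. Then $$D^*(\beta_\alpha)\le \max_{s\in[n]}d^*(\mathcal{A}_s(\alpha))+d^*(\mathcal{A}_n(\alpha))\le 2\max_{s\in[n]}d^*(\mathcal{A}_s(\alpha)).$$
   Context: $[n]=\{1,\dots,n\}$ and $\{x\}$ denotes the fractional part of $x$. For irrational $\alpha$, the Sós permutation $\beta_\alpha$ of $[n]$ is defined by $\beta_\alpha(t)=|\{s\in[n]:\{\alpha s\}\le\{\alpha t\}\}|$ (so $\beta_\alpha(s)<\beta_\alpha(t)$ iff $\{\alpha s\}<\{\alpha t\}$). $D^*(\beta_\alpha)=\max_{s,t\in[n]}\bigl|\,|\beta_\alpha([s])\cap[t]|-st/n\,\bigr|$. For $s\ge1$, $\mathcal{A}_s(\alpha)=\{\{\alpha x\}:x\in[s]\}$, and for a finite set $A\subset[0,1]$, $d^*(A)=\sup_{0\le x\le1}\bigl|\,|A\cap[0,x]|-x|A|\,\bigr|$. *)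

theory Defs
  imports "HOL-Analysis.Analysis"
begin

definition sos_perm :: "real \<Rightarrow> nat \<Rightarrow> nat \<Rightarrow> nat" where
  "sos_perm \<alpha> n t = card {s \<in> {1..n}. frac (\<alpha> * real s) \<le> frac (\<alpha> * real t)}"

definition perm_discrepancy :: "nat \<Rightarrow> (nat \<Rightarrow> nat) \<Rightarrow> real" where
  "perm_discrepancy n \<beta> =
     Max {\<bar>real (card (\<beta> ` {1..s} \<inter> {1..t})) - real s * real t / real n\<bar> | s t. s \<in> {1..n} \<and> t \<in> {1..n}}"

definition A_set :: "real \<Rightarrow> nat \<Rightarrow> real set" where
  "A_set \<alpha> s = (\<lambda>x. frac (\<alpha> * real x)) ` {1..s}"

definition set_discrepancy :: "real set \<Rightarrow> real" where
  "set_discrepancy A = (SUP x\<in>{0..1}. \<bar>real (card (A \<inter> {0..x})) - x * real (card A)\<bar>)"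

end

theory Submission
  imports Defs
begin

lemma inj_frac_mult:
  fixes \<alpha> :: real
  assumes "\<alpha> \<notin> \<rat>"
  shows "inj (\<lambda>x::nat. frac (\<alpha> * real x))"
proof (rule injI)
  fix x y :: nat
  assume eq: "frac (\<alpha> * real x) = frac (\<alpha> * real y)"
  show "x = y"
  proof (rule ccontr)
    assume ne: "x \<noteq> y"
    have "\<alpha> * real x - \<alpha> * real y = of_int (floor (\<alpha> * real x)) - of_int (floor (\<alpha> * real y))"
      using eq by (simp add: frac_def)
    hence e: "\<alpha> * (real x - real y) = of_int (floor (\<alpha> * real x) - floor (\<alpha> * real y))"
      by (simp add: algebra_simps)
    have nz: "real x - real y \<noteq> 0" using ne by simp
    have "\<alpha> = of_int (floor (\<alpha> * real x) - floor (\<alpha> * real y)) / (real x - real y)"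
      using e nz by (simp add: field_simps)
    also have "\<dots> \<in> \<rat>" by (intro Rats_divide Rats_diff Rats_of_int Rats_of_nat)
    finally show False using assms by simp
  qed
qed

lemma disc_ge:
  assumes "finite A" "0 \<le> x" "x \<le> 1"
  shows "\<bar>real (card (A \<inter> {0..x})) - x * real (card A)\<bar> \<le> set_discrepancy A"
  unfolding set_discrepancy_def
proof (rule cSUP_upper)
  show "x \<in> {0..1}" using assms by simp
  show "bdd_above ((\<lambda>x. \<bar>real (card (A \<inter> {0..x})) - x * real (card A)\<bar>) ` {0..1})"
  proof (rule bdd_aboveI2)
    fix z :: real assume z: "z \<in> {0..1}"
    have c: "card (A \<inter> {0..z}) \<le> card A" using assms(1) by (intro card_mono) auto
    have "z * real (card A) \<le> real (card A)" using z by (simp add: mult_left_le_one_le)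
    moreover have "0 \<le> z * real (card A)" using z by simp
    ultimately show "\<bar>real (card (A \<inter> {0..z})) - z * real (card A)\<bar> \<le> 2 * real (card A)"
      using c by linarith
  qed
qed

lemma ne_imp: "x \<in> S \<Longrightarrow> S \<noteq> {}" by blast

theorem mainTheorem11:
  fixes \<alpha> :: real and n :: nat
  assumes "\<alpha> \<notin> \<rat>" and "n \<ge> 1"
  shows "perm_discrepancy n (sos_perm \<alpha> n)
           \<le> (MAX s\<in>{1..n}. set_discrepancy (A_set \<alpha> s)) + set_discrepancy (A_set \<alpha> n)
       \<and> (MAX s\<in>{1..n}. set_discrepancy (A_set \<alpha> s)) + set_discrepancy (A_set \<alpha> n)
           \<le> 2 * (MAX s\<in>{1..n}. set_discrepancy (A_set \<alpha> s))"
proof -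
  define f where "f = (\<lambda>x::nat. frac (\<alpha> * real x))"
  define \<beta> where "\<beta> = sos_perm \<alpha> n"
  have injf: "inj f" unfolding f_def by (rule inj_frac_mult[OF assms(1)])
  have f0: "0 \<le> f x" for x unfolding f_def by (simp add: frac_ge_0)
  have f1: "f x < 1" for x unfolding f_def by (simp add: frac_lt_1)
  have bdef: "\<beta> x = card {s\<in>{1..n}. f s \<le> f x}" for x
    by (simp add: \<beta>_def sos_perm_def f_def)
  have mono: "(\<beta> x \<le> \<beta> u) = (f x \<le> f u)" if "x \<in> {1..n}" "u \<in> {1..n}" for x u
  proof
    assume "f x \<le> f u"
    thus "\<beta> x \<le> \<beta> u" unfolding bdef by (intro card_mono) auto
  next
    assume h: "\<beta> x \<le> \<beta> u"
    show "f x \<le> f u"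
    proof (rule ccontr)
      assume "\<not> f x \<le> f u"
      hence "{s\<in>{1..n}. f s \<le> f u} \<subset> {s\<in>{1..n}. f s \<le> f x}" using that by auto
      hence "\<beta> u < \<beta> x" unfolding bdef by (intro psubset_card_mono) auto
      thus False using h by simp
    qed
  qed
  have range: "\<beta> x \<in> {1..n}" if "x \<in> {1..n}" for x
  proof -
    have "card {s\<in>{1..n}. f s \<le> f x} \<le> card {1..n}" by (intro card_mono) auto
    moreover have "card {s\<in>{1..n}. f s \<le> f x} > 0" using that by (subst card_gt_0_iff) auto
    ultimately show ?thesis unfolding bdef by simp
  qed
  have injb: "inj_on \<beta> {1..n}"
  proof (rule inj_onI)
    fix x y assume "x \<in> {1..n}" "y \<in> {1..n}" "\<beta> x = \<beta> y"
    hence "f x = f y" using mono by (metis order_antisym order_refl)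
    thus "x = y" using injf by (simp add: inj_eq)
  qed
  have surjb: "\<beta> ` {1..n} = {1..n}"
    by (rule endo_inj_surj) (use range injb in auto)
  have injfs: "inj_on f S" for S using injf by (rule inj_on_subset) simp
  have cardA: "card (A_set \<alpha> s) = s" for s
    unfolding A_set_def f_def[symmetric] by (simp add: card_image[OF injfs])
  have finA: "finite (A_set \<alpha> s)" for s unfolding A_set_def by simp
  define M where "M = (MAX s\<in>{1..n}. set_discrepancy (A_set \<alpha> s))"
  have dM: "set_discrepancy (A_set \<alpha> s) \<le> M" if "s \<in> {1..n}" for s
    unfolding M_def using that by (intro Max_ge) auto
  have Aeq: "A_set \<alpha> s \<inter> {0..y} = f ` {x\<in>{1..s}. f x \<le> y}" for s y
    unfolding A_set_def f_def[symmetric] using f0 by auto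
  have cardAy: "card (A_set \<alpha> s \<inter> {0..y}) = card {x\<in>{1..s}. f x \<le> y}" for s y
    unfolding Aeq by (simp add: card_image[OF injfs])
  define dn where "dn = set_discrepancy (A_set \<alpha> n)"
  have key: "\<bar>real (card (\<beta> ` {1..s} \<inter> {1..t})) - real s * real t / real n\<bar> \<le> M + dn"
    if s: "s \<in> {1..n}" and t: "t \<in> {1..n}" for s t
  proof -
    obtain u where u: "u \<in> {1..n}" "\<beta> u = t" using t surjb by (metis imageE)
    define y where "y = f u"
    have c1: "\<beta> ` {1..s} \<inter> {1..t} = \<beta> ` {x\<in>{1..s}. f x \<le> y}"
    proof (rule set_eqI, rule iffI)
      fix z assume "z \<in> \<beta> ` {1..s} \<inter> {1..t}"
      then obtain x where x: "x \<in> {1..s}" "z = \<beta> x" "\<beta> x \<le> t" by auto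
      have "x \<in> {1..n}" using x s by auto
      hence "f x \<le> y" using mono[OF _ u(1)] x u y_def by simp
      thus "z \<in> \<beta> ` {x\<in>{1..s}. f x \<le> y}" using x by auto
    next
      fix z assume "z \<in> \<beta> ` {x\<in>{1..s}. f x \<le> y}"
      then obtain x where x: "x \<in> {1..s}" "z = \<beta> x" "f x \<le> y" by auto
      have xn: "x \<in> {1..n}" using x s by auto
      hence "\<beta> x \<le> t" using mono[OF _ u(1)] x u y_def by simp
      moreover have "\<beta> x \<ge> 1" using range[OF xn] by simp
      ultimately show "z \<in> \<beta> ` {1..s} \<inter> {1..t}" using x by auto
    qed
    have "card (\<beta> ` {1..s} \<inter> {1..t}) = card {x\<in>{1..s}. f x \<le> y}"
      unfolding c1 by (rule card_image, rule inj_on_subset[OF injb]) (use s in auto)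
    hence C: "card (\<beta> ` {1..s} \<inter> {1..t}) = card (A_set \<alpha> s \<inter> {0..y})"
      using cardAy by simp
    have T: "card (A_set \<alpha> n \<inter> {0..y}) = t"
      using cardAy u bdef y_def by simp
    have y01: "0 \<le> y" "y \<le> 1" using f0 f1 y_def less_imp_le by auto
    have e1: "\<bar>real (card (A_set \<alpha> s \<inter> {0..y})) - y * real s\<bar> \<le> M"
      using disc_ge[OF finA y01] cardA dM[OF s] by (metis order_trans)
    have e2: "\<bar>real t - y * real n\<bar> \<le> dn"
      using disc_ge[OF finA y01, of n] cardA T dn_def by metis
    define C' where "C' = real (card (A_set \<alpha> s \<inter> {0..y}))"
    have npos: "real n > 0" using assms(2) by simp
    have sn: "real s / real n \<le> 1" "0 \<le> real s / real n" using s npos by auto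
    have eq: "C' - real s * real t / real n = (C' - y * real s) + (real s / real n) * (y * real n - real t)"
      using npos by (simp add: field_simps)
    have "\<bar>(real s / real n) * (y * real n - real t)\<bar> = (real s / real n) * \<bar>real t - y * real n\<bar>"
      using sn by (simp add: abs_mult abs_minus_commute)
    also have "\<dots> \<le> 1 * \<bar>real t - y * real n\<bar>" using sn by (intro mult_right_mono) auto
    finally have e3: "\<bar>(real s / real n) * (y * real n - real t)\<bar> \<le> dn" using e2 by simp
    have tri: "\<bar>(C' - y * real s) + (real s / real n) * (y * real n - real t)\<bar>
       \<le> \<bar>C' - y * real s\<bar> + \<bar>(real s / real n) * (y * real n - real t)\<bar>"
      by (rule abs_triangle_ineq)
    have "\<bar>C' - real s * real t / real n\<bar> \<le> M + dn"
      unfolding eq using order_trans[OF tri add_mono[OF e1[folded C'_def] e3]] .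
    thus ?thesis using C C'_def by simp
  qed
  have part1: "perm_discrepancy n \<beta> \<le> M + dn"
    unfolding perm_discrepancy_def
  proof (subst Max_le_iff)
    show "finite {\<bar>real (card (\<beta> ` {1..s} \<inter> {1..t})) - real s * real t / real n\<bar> | s t. s \<in> {1..n} \<and> t \<in> {1..n}}"
      by (rule finite_image_set2) auto
    show "{\<bar>real (card (\<beta> ` {1..s} \<inter> {1..t})) - real s * real t / real n\<bar> | s t. s \<in> {1..n} \<and> t \<in> {1..n}} \<noteq> {}"
    proof -
      have "\<bar>real (card (\<beta> ` {1..1} \<inter> {1..1})) - real 1 * real 1 / real n\<bar> \<in> {\<bar>real (card (\<beta> ` {1..s} \<inter> {1..t})) - real s * real t / real n\<bar> | s t. s \<in> {1..n} \<and> t \<in> {1..n}}"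
        using assms(2) by (intro CollectI exI[of _ "1::nat"] conjI refl) auto
      thus ?thesis by (rule ne_imp)
    qed
    show "\<forall>a\<in>{\<bar>real (card (\<beta> ` {1..s} \<inter> {1..t})) - real s * real t / real n\<bar> | s t. s \<in> {1..n} \<and> t \<in> {1..n}}. a \<le> M + dn"
      by (clarify, rule key, assumption+)
  qed
  have part2: "dn \<le> M" unfolding dn_def using dM assms(2) by simp
  show ?thesis using part1 part2 unfolding M_def dn_def \<beta>_def by simp
qed

end
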